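(* EDHNN is a special case of the MultiSet framework: there is a choice of the MultiSet functions $f_{\mathcal{V}\to\mathcal{E}}, f_{\mathcal{E}\to\mathcal{V}}, f_{\mathcal{V}\to\mathcal{V}}$ such that the MultiSet scheme reproduces the hyperedge representations and the final node representations computed by EDHNN.
   Context: A hypergraph is $\mathcal{G}=(\mathcal{V},\mathcal{E})$ with each hyperedge $e\in\mathcal{E}$ a subset of $\mathcal{V}$; $\mathcal{E}_v=\{e\in\mathcal{E}:v\in e\}$ and $d_v=|\mathcal{E}_v|$. A function is called a multiset function if it is permutation invariant with respect to each of its (set-valued) arguments in turn. MultiSet framework: each hyperedge $e$ has a representation $\bm z_e^{(t)}\in\mathbb{R}^d$ at step $t$; each node $v$ has one representation $\bm x_{v,e}^{(t)}\in\mathbb{R}^f$ for each hyperedge $e\in\mathcal{E}_v$, and $\mathbb{X}_v^{(t)}=\{\bm x_{v,e}^{(t)}\}_{e\in\mathcal{E}_v}$. The updates are $$\bm z_e^{(t+1)}=f_{\mathcal{V}\to\mathcal{E}}\big(\{\mathbb{X}_u^{(t)}\}_{u\in e};\ \bm z_e^{(t)}\big),\qquad \bm x_{v,e}^{(t+1)}=f_{\mathcal{E}\to\mathcal{V}}\big(\{\bm z_{e}^{(t+1)}\}_{e\in\mathcal{E}_v};\ \{\mathbb{X}_v^{(k)}\}_{k=0}^{t}\big),$$ and after $T$ steps a readout $\bm x_v^{(T)}=f_{\mathcal{V}\to\mathcal{V}}\big(\{\mathbb{X}_v^{(k)}\}_{k=0}^{T}\big)$, where $f_{\mathcal{V}\to\mathcal{E}},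 f_{\mathcal{E}\to\mathcal{V}}$ are multiset functions with respect to their first input and $f_{\mathcal{V}\to\mathcal{V}}$ is a multiset function. EDHNN is the propagation scheme with a single representation $\bm x_v^{(t)}$ per node and updates $$\bm z_e^{(t+1)}=\sum_{u\in e}\hat\phi(\bm x_u^{(t)}),\qquad \bm x_v^{(t+1)}=\hat\psi\Big(\bm x_v^{(t)},\ \sum_{e\in\mathcal{E}_v}\hat\rho\big(\bm x_v^{(t)},\bm z_e^{(t+1)}\big),\ \bm x_v^{(0)},\ d_v\Big),$$ where $\hat\phi,\hat\psi,\hat\rho$ are MLPs shared across layers, and its output after $T$ steps is $\bm x_v^{(T)}$. *)

theory Defs
  imports Complex_Main "HOL-Library.Multiset"
begin

definition inc :: "'v set set \<Rightarrow> 'v \<Rightarrow> 'v set set" where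
  "inc E v = {e \<in> E. v \<in> e}"

definition deg :: "'v set set \<Rightarrow> 'v \<Rightarrow> nat" where
  "deg E v = card (inc E v)"

text \<open>phi, rho, psi are the (layer-shared) MLPs; x0 the initial node features.
  edhnn_x ... t v is the node representation x_v^(t).\<close>

primrec edhnn_x ::
  "('x \<Rightarrow> 'z::comm_monoid_add) \<Rightarrow> ('x \<Rightarrow> 'z \<Rightarrow> 'm::comm_monoid_add) \<Rightarrow>
   ('x \<Rightarrow> 'm \<Rightarrow> 'x \<Rightarrow> real \<Rightarrow> 'x) \<Rightarrow> 'v set set \<Rightarrow> ('v \<Rightarrow> 'x) \<Rightarrow> nat \<Rightarrow> 'v \<Rightarrow> 'x" where
  "edhnn_x \<phi> \<rho> \<psi> E x0 0 = x0"
| "edhnn_x \<phi> \<rho> \<psi> E x0 (Suc t) =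
     (let x = edhnn_x \<phi> \<rho> \<psi> E x0 t;
          z = (\<lambda>e. \<Sum>u\<in>e. \<phi> (x u))
      in (\<lambda>v. \<psi> (x v) (\<Sum>e\<in>inc E v. \<rho> (x v) (z e)) (x0 v) (real (deg E v))))"

text \<open>edhnn_z ... (Suc t) e is the hyperedge representation z_e^(t+1) = sum over u in e of phi(x_u^(t)).
  (The value at 0 is irrelevant; EDHNN has no z^(0).)\<close>

definition edhnn_z ::
  "('x \<Rightarrow> 'z::comm_monoid_add) \<Rightarrow> ('x \<Rightarrow> 'z \<Rightarrow> 'm::comm_monoid_add) \<Rightarrow>
   ('x \<Rightarrow> 'm \<Rightarrow> 'x \<Rightarrow> real \<Rightarrow> 'x) \<Rightarrow> 'v set set \<Rightarrow> ('v \<Rightarrow> 'x) \<Rightarrow> nat \<Rightarrow> 'v set \<Rightarrow> 'z" where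
  "edhnn_z \<phi> \<rho> \<psi> E x0 t e = (\<Sum>u\<in>e. \<phi> (edhnn_x \<phi> \<rho> \<psi> E x0 (t - 1) u))"

text \<open>A state at step t: hyperedge representations z :: 'v set => 'z and node-hyperedge
  representations x v e = x_{v,e}.
  Using HOL multisets as the set-valued inputs makes f_VE, f_EV (in their first argument)
  and f_VV multiset functions by construction.\<close>

definition X_of :: "'v set set \<Rightarrow> ('v \<Rightarrow> 'v set \<Rightarrow> 'x) \<Rightarrow> 'v \<Rightarrow> 'x multiset" where
  "X_of E x v = image_mset (\<lambda>e. x v e) (mset_set (inc E v))"

text \<open>ms_hist fVE fEV E z0 x0 t = [state_0, ..., state_t].
  fVE ({X_u^(t)}_{u in e}) (z_e^(t)) and fEV ({z_e^(t+1)}_{e in E_v}) [X_v^(0),...,X_v^(t)].\<close>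

primrec ms_hist ::
  "('x multiset multiset \<Rightarrow> 'z \<Rightarrow> 'z) \<Rightarrow> ('z multiset \<Rightarrow> 'x multiset list \<Rightarrow> 'x) \<Rightarrow>
   'v set set \<Rightarrow> ('v set \<Rightarrow> 'z) \<Rightarrow> ('v \<Rightarrow> 'v set \<Rightarrow> 'x) \<Rightarrow> nat \<Rightarrow>
   (('v set \<Rightarrow> 'z) \<times> ('v \<Rightarrow> 'v set \<Rightarrow> 'x)) list" where
  "ms_hist fVE fEV E z0 x0 0 = [(z0, x0)]"
| "ms_hist fVE fEV E z0 x0 (Suc t) =
     (let H = ms_hist fVE fEV E z0 x0 t;
          z = fst (last H); x = snd (last H);
          z' = (\<lambda>e. fVE (image_mset (\<lambda>u. X_of E x u) (mset_set e)) (z e));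
          x' = (\<lambda>v e. fEV (image_mset z' (mset_set (inc E v)))
                           (map (\<lambda>s. X_of E (snd s) v) H))
      in H @ [(z', x')])"

definition ms_out ::
  "('x multiset multiset \<Rightarrow> 'z \<Rightarrow> 'z) \<Rightarrow> ('z multiset \<Rightarrow> 'x multiset list \<Rightarrow> 'x) \<Rightarrow>
   ('x multiset list \<Rightarrow> 'x) \<Rightarrow>
   'v set set \<Rightarrow> ('v set \<Rightarrow> 'z) \<Rightarrow> ('v \<Rightarrow> 'v set \<Rightarrow> 'x) \<Rightarrow> nat \<Rightarrow> 'v \<Rightarrow> 'x" where
  "ms_out fVE fEV fVV E z0 x0 T v =
     fVV (map (\<lambda>s. X_of E (snd s) v) (ms_hist fVE fEV E z0 x0 T))"

end

theory Submission
  imports Defs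
begin

definition pick :: "'x multiset \<Rightarrow> 'x" where
  "pick X = the_elem (set_mset X)"

definition gVE :: "('x \<Rightarrow> 'z::comm_monoid_add) \<Rightarrow> 'x multiset multiset \<Rightarrow> 'z \<Rightarrow> 'z" where
  "gVE \<phi> M z = sum_mset (image_mset (\<lambda>X. \<phi> (pick X)) M)"

definition gEV :: "('x \<Rightarrow> 'z \<Rightarrow> 'm::comm_monoid_add) \<Rightarrow> ('x \<Rightarrow> 'm \<Rightarrow> 'x \<Rightarrow> real \<Rightarrow> 'x)
   \<Rightarrow> 'z multiset \<Rightarrow> 'x multiset list \<Rightarrow> 'x" where
  "gEV \<rho> \<psi> Zs Hs = \<psi> (pick (last Hs)) (sum_mset (image_mset (\<rho> (pick (last Hs))) Zs))
       (pick (hd Hs)) (real (size Zs))"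

definition gVV :: "'x multiset list \<Rightarrow> 'x" where
  "gVV Hs = pick (last Hs)"

lemma pick_X:
  assumes "finite E" "\<And>e. x v e = c" "inc E v \<noteq> {}"
  shows "pick (X_of E x v) = c"
proof -
  have fin: "finite (inc E v)" using assms(1) unfolding inc_def by simp
  have xv: "x v = (\<lambda>_. c)" using assms(2) by auto
  have "X_of E x v = replicate_mset (card (inc E v)) c"
    unfolding X_of_def xv by (simp add: image_mset_const_eq)
  moreover have "card (inc E v) > 0" using fin assms(3) by (simp add: card_gt_0_iff)
  ultimately show ?thesis unfolding pick_def by (simp add: set_mset_replicate_mset_subset)
qed

lemma last_len: "length xs = Suc t \<Longrightarrow> last xs = xs ! t"
  by (metis diff_Suc_1 last_conv_nth list.size(3) nat.distinct(1))

lemma len_hist: "length (ms_hist fVE fEV E z0 x0 t) = Suc t"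
  by (induction t) (simp_all add: Let_def)

lemma main:
  assumes finE: "finite E" and fine: "\<forall>e\<in>E. finite e"
  shows "\<forall>k\<le>t. (\<forall>v. inc E v \<noteq> {} \<longrightarrow> (\<forall>e. snd (ms_hist (gVE \<phi>) (gEV \<rho> \<psi>) E z0 (\<lambda>v e. x0 v) t ! k) v e
                     = edhnn_x \<phi> \<rho> \<psi> E x0 k v))
     \<and> (1 \<le> k \<longrightarrow> (\<forall>e\<in>E. fst (ms_hist (gVE \<phi>) (gEV \<rho> \<psi>) E z0 (\<lambda>v e. x0 v) t ! k) e
                     = edhnn_z \<phi> \<rho> \<psi> E x0 k e))"
proof (induction t)
  case 0
  then show ?case by simp
next
  case (Suc t)
  let ?H = "ms_hist (gVE \<phi>) (gEV \<rho> \<psi>) E z0 (\<lambda>v e. x0 v) t"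
  define x where "x = snd (last ?H)"
  define z' where "z' = (\<lambda>e. gVE \<phi> (image_mset (\<lambda>u. X_of E x u) (mset_set e)) (fst (last ?H) e))"
  define x' where "x' = (\<lambda>v (e::'a set). gEV \<rho> \<psi> (image_mset z' (mset_set (inc E v)))
                           (map (\<lambda>s. X_of E (snd s) v) ?H))"
  have len: "length ?H = Suc t" by (rule len_hist)
  have Hs: "ms_hist (gVE \<phi>) (gEV \<rho> \<psi>) E z0 (\<lambda>v e. x0 v) (Suc t) = ?H @ [(z', x')]"
    by (simp add: Let_def x_def z'_def x'_def)
  have lastH: "last ?H = ?H ! t" using len by (rule last_len)
  have hdH: "hd ?H = ?H ! 0" using len by (metis hd_conv_nth list.size(3) nat.distinct(1))
  have Hne: "?H \<noteq> []" using len by auto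
  have xt: "pick (X_of E x u) = edhnn_x \<phi> \<rho> \<psi> E x0 t u" if "inc E u \<noteq> {}" for u
    using Suc.IH that finE unfolding x_def lastH by (intro pick_X) auto
  have x0t: "pick (X_of E (snd (?H ! 0)) u) = x0 u" if "inc E u \<noteq> {}" for u
    using Suc.IH[rule_format, of 0] that finE by (intro pick_X) auto
  have z'e: "z' e = edhnn_z \<phi> \<rho> \<psi> E x0 (Suc t) e" if "e \<in> E" for e
  proof -
    have "z' e = (\<Sum>u\<in>e. \<phi> (pick (X_of E x u)))"
      unfolding z'_def gVE_def by (simp add: sum_unfold_sum_mset image_mset.compositionality o_def)
    also have "\<dots> = (\<Sum>u\<in>e. \<phi> (edhnn_x \<phi> \<rho> \<psi> E x0 t u))"
    proof (rule sum.cong)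
      fix u assume "u \<in> e"
      then have "inc E u \<noteq> {}" using that unfolding inc_def by auto
      then show "\<phi> (pick (X_of E x u)) = \<phi> (edhnn_x \<phi> \<rho> \<psi> E x0 t u)" using xt by simp
    qed simp
    finally show ?thesis unfolding edhnn_z_def by simp
  qed
  have x'v: "x' v e = edhnn_x \<phi> \<rho> \<psi> E x0 (Suc t) v" if "inc E v \<noteq> {}" for v e
  proof -
    have fin: "finite (inc E v)" using finE unfolding inc_def by simp
    have "x' v e = \<psi> (edhnn_x \<phi> \<rho> \<psi> E x0 t v)
         (\<Sum>e\<in>inc E v. \<rho> (edhnn_x \<phi> \<rho> \<psi> E x0 t v) (z' e)) (x0 v) (real (card (inc E v)))"
    proof -
      have l: "pick (last (map (\<lambda>s. X_of E (snd s) v) ?H)) = edhnn_x \<phi> \<rho> \<psi> E x0 t v"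
        using last_map[OF Hne, of "\<lambda>s. X_of E (snd s) v"] xt[OF that] unfolding x_def by simp
      have h: "pick (hd (map (\<lambda>s. X_of E (snd s) v) ?H)) = x0 v"
        using hd_map[OF Hne, of "\<lambda>s. X_of E (snd s) v"] x0t[OF that] unfolding hdH by simp
      show ?thesis unfolding x'_def gEV_def l h using fin
        by (simp add: sum_unfold_sum_mset image_mset.compositionality o_def)
    qed
    also have "(\<Sum>e\<in>inc E v. \<rho> (edhnn_x \<phi> \<rho> \<psi> E x0 t v) (z' e))
       = (\<Sum>e\<in>inc E v. \<rho> (edhnn_x \<phi> \<rho> \<psi> E x0 t v) (\<Sum>u\<in>e. \<phi> (edhnn_x \<phi> \<rho> \<psi> E x0 t u)))"
      by (rule sum.cong) (auto simp: z'e edhnn_z_def inc_def)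
    finally show ?thesis by (simp add: Let_def deg_def)
  qed
  show ?case
  proof (intro allI impI)
    fix k assume k: "k \<le> Suc t"
    show "(\<forall>v. inc E v \<noteq> {} \<longrightarrow> (\<forall>e. snd (ms_hist (gVE \<phi>) (gEV \<rho> \<psi>) E z0 (\<lambda>v e. x0 v) (Suc t) ! k) v e
                     = edhnn_x \<phi> \<rho> \<psi> E x0 k v))
     \<and> (1 \<le> k \<longrightarrow> (\<forall>e\<in>E. fst (ms_hist (gVE \<phi>) (gEV \<rho> \<psi>) E z0 (\<lambda>v e. x0 v) (Suc t) ! k) e
                     = edhnn_z \<phi> \<rho> \<psi> E x0 k e))"
    proof (cases "k = Suc t")
      case True
      then show ?thesis unfolding Hs using len x'v z'e by (simp add: nth_append)
    next
      case False
      then have "k \<le> t" using k by simp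
      then show ?thesis unfolding Hs using len Suc.IH by (simp add: nth_append)
    qed
  qed
qed

theorem proposition3:
  fixes \<phi> :: "'x::real_vector \<Rightarrow> 'z::real_vector"
    and \<rho> :: "'x \<Rightarrow> 'z \<Rightarrow> 'm::real_vector"
    and \<psi> :: "'x \<Rightarrow> 'm \<Rightarrow> 'x \<Rightarrow> real \<Rightarrow> 'x"
  shows "\<exists>(fVE :: 'x multiset multiset \<Rightarrow> 'z \<Rightarrow> 'z)
            (fEV :: 'z multiset \<Rightarrow> 'x multiset list \<Rightarrow> 'x)
            (fVV :: 'x multiset list \<Rightarrow> 'x).
          \<forall>(V :: 'v set) (E :: 'v set set) (x0 :: 'v \<Rightarrow> 'x) (z0 :: 'v set \<Rightarrow> 'z) (T :: nat).
            finite V \<longrightarrow> (\<forall>e\<in>E. e \<subseteq> V) \<longrightarrow> (\<forall>v\<in>V. inc E v \<noteq> {}) \<longrightarrow>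
            (\<forall>t\<in>{1..T}. \<forall>e\<in>E.
                fst (ms_hist fVE fEV E z0 (\<lambda>v e. x0 v) T ! t) e = edhnn_z \<phi> \<rho> \<psi> E x0 t e)
            \<and> (\<forall>v\<in>V. ms_out fVE fEV fVV E z0 (\<lambda>v e. x0 v) T v = edhnn_x \<phi> \<rho> \<psi> E x0 T v)"
proof (intro exI allI impI conjI ballI)
  fix V :: "'v set" and E :: "'v set set" and x0 :: "'v \<Rightarrow> 'x" and z0 T
  assume fV: "finite V" and EV: "\<forall>e\<in>E. e \<subseteq> V" and nV: "\<forall>v\<in>V. inc E v \<noteq> {}"
  have finE: "finite E" using fV EV by (meson Pow_iff finite_Pow_iff finite_subset subsetI)
  have fine: "\<forall>e\<in>E. finite e" using fV EV finite_subset by blast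
  note M = main[OF finE fine, of T \<phi> \<rho> \<psi> z0 x0]
  show "fst (ms_hist (gVE \<phi>) (gEV \<rho> \<psi>) E z0 (\<lambda>v e. x0 v) T ! t) e = edhnn_z \<phi> \<rho> \<psi> E x0 t e"
    if "t \<in> {1..T}" "e \<in> E" for t e
    using M that by auto
  fix v assume v: "v \<in> V"
  let ?H = "ms_hist (gVE \<phi>) (gEV \<rho> \<psi>) E z0 (\<lambda>v e. x0 v) T"
  have len: "length ?H = Suc T" by (rule len_hist)
  have "last ?H = ?H ! T" using len by (rule last_len)
  moreover have "?H \<noteq> []" using len by auto
  ultimately show "ms_out (gVE \<phi>) (gEV \<rho> \<psi>) gVV E z0 (\<lambda>v e. x0 v) T v = edhnn_x \<phi> \<rho> \<psi> E x0 T v"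
    unfolding ms_out_def gVV_def using M v nV finE
    by (simp add: last_map pick_X)
qed

end
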